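(* Let $H$ be a group of isometries of $\mathcal{C}_k$ (generated by Euclidean isometries, phases and the rotation map) which contains the circle translation $S_\varphi$. Then $\mathcal{C}_k(H)\neq\emptyset$ only if $\varphi=2r\pi/k$ for some $r\in\mathbb{Z}$.
   Context: Fix $\mu_0>0$, $S^1=\mathbb{R}/\frac{2\pi}{\mu_0}\mathbb{Z}$. $\mathcal{C}_k$ is the moduli space of framed $SU(2)$ calorons on $S^1\times\mathbb{R}^3$ (finite-action anti-self-dual $SU(2)$ connections with the standard caloron boundary conditions) with monopole charges $(k,k)$ and equal monopole masses $\mu_0/2$, modulo gauge transformations equal to the identity at spatial infinity. $S_\varphi$ is the rotation of the circle factor by angle $\varphi$ (i.e. $t\mapsto t+\varphi/\mu_0$), acting on calorons by pullback. $\mathcal{C}_k(H)$ is the set of $[A]\in\mathcal{C}_k$ with $[h\cdot A]=[A]$ for all $h\in H$. Known correspondence (Charbonneau–Hurtubise): $\mathcal{C}_k$ is biholomorphic to the moduli space of non-singular monad matrices $(A,B,C,D)$ ($A,B\in Mat_{k\times k}(\mathbb{C})$, $A$ invertible, $C\in Mat_{k\times 2}$, $D\in Mat_{2\times k}$, $[A,B]+CD=0$ plus full-rank conditions, modulo simultaneous $GL(k,\mathbb{C})$ conjugation $(gAg^{-1},gBg^{-1},gC,Dg^{-1})$), under which $S_\varphi$ acts by $(A,B,C,D)\mapsto(e^{-i\varphi}A,B,C\,\mathrm{adj}(\sigma_\varphi),\sigma_\varphi D)$ with $\sigma_\varphi=\mathrm{diag}(e^{-3i\varphi/4},e^{-i\varphi/4})$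 and $\mathrm{adj}(\sigma)=\det(\sigma)\sigma^{-1}$. *)

theory Defs
  imports "HOL-Analysis.Analysis"
begin

type_synonym 'k monad =
  "(complex^'k^'k) \<times> (complex^'k^'k) \<times> (complex^2^'k) \<times> (complex^'k^2)"

definition nonsingular_monad :: "'k::finite monad \<Rightarrow> bool" where
  "nonsingular_monad m \<longleftrightarrow> (case m of (A, B, C, D) \<Rightarrow>
     invertible A \<and>
     A ** B - B ** A + C ** D = 0 \<and>
     (\<forall>z w v. (A - mat z) *v v = 0 \<and> (B - mat w) *v v = 0 \<and> D *v v = 0 \<longrightarrow> v = 0) \<and>
     (\<forall>z w u. \<exists>x y s. - ((B - mat w) *v x) + (A - mat z) *v y + C *v s = u))"

definition monad_equiv :: "'k::finite monad \<Rightarrow> 'k monad \<Rightarrow> bool" where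
  "monad_equiv m m' \<longleftrightarrow> (case m of (A, B, C, D) \<Rightarrow>
     (\<exists>g :: complex^'k^'k. invertible g \<and>
        m' = (g ** A ** matrix_inv g, g ** B ** matrix_inv g, g ** C, D ** matrix_inv g)))"

definition monad_rel :: "('k::finite monad \<times> 'k monad) set" where
  "monad_rel = {(m, m'). nonsingular_monad m \<and> nonsingular_monad m' \<and> monad_equiv m m'}"

text \<open>The caloron moduli space C_k, realised (Charbonneau--Hurtubise) as the set of
  GL(k,C)-orbits of non-singular monads.\<close>
definition caloron_moduli :: "'k::finite monad set set" where
  "caloron_moduli = {m. nonsingular_monad m} // monad_rel"

definition sigma_mat :: "real \<Rightarrow> complex^2^2" where
  "sigma_mat \<phi> = (\<chi> i j. if i = j then (if i = 1 then exp (- 3 * \<i> * of_real \<phi> / 4)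
                                              else exp (- \<i> * of_real \<phi> / 4)) else 0)"

definition adj2 :: "complex^2^2 \<Rightarrow> complex^2^2" where
  "adj2 \<sigma> = (\<chi> i j. det \<sigma> * matrix_inv \<sigma> $ i $ j)"

definition S_act :: "real \<Rightarrow> 'k::finite monad \<Rightarrow> 'k monad" where
  "S_act \<phi> m = (case m of (A, B, C, D) \<Rightarrow>
     (mat (exp (- \<i> * of_real \<phi>)) ** A, B, C ** adj2 (sigma_mat \<phi>), sigma_mat \<phi> ** D))"

definition S_cls :: "real \<Rightarrow> 'k::finite monad set \<Rightarrow> 'k monad set" where
  "S_cls \<phi> X = monad_rel `` (S_act \<phi> ` X)"

definition fixed_classes :: "('k::finite monad set \<Rightarrow> 'k monad set) set \<Rightarrow> 'k monad set set" where
  "fixed_classes H = {X \<in> caloron_moduli. \<forall>h\<in>H. h X = X}"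

end

theory Submission
  imports Defs
begin

lemma inv_right_aux:
  fixes g :: "complex^'n^'n"
  assumes "invertible g"
  shows "g ** matrix_inv g = mat 1"
proof -
  have "\<exists>A'. g ** A' = mat 1 \<and> A' ** g = mat 1" using assms unfolding invertible_def by blast
  then show ?thesis unfolding matrix_inv_def by (rule someI2_ex) blast
qed

lemma det_conj_aux:
  fixes g M :: "complex^'n^'n"
  assumes "invertible g"
  shows "det (g ** M ** matrix_inv g) = det M"
proof -
  have "det (g ** M ** matrix_inv g) = det M * det (g ** matrix_inv g)"
    by (simp add: det_mul)
  also have "\<dots> = det M" using inv_right_aux[OF assms] by simp
  finally show ?thesis .
qed

lemma det_mat_aux:
  "det (mat c :: complex^'n^'n) = c ^ CARD('n)"
  by (subst det_diagonal) (simp_all add: mat_def)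

theorem mainTheorem4:
  fixes H :: "('k::finite monad set \<Rightarrow> 'k monad set) set" and \<phi> :: real
  assumes "S_cls \<phi> \<in> H"
    and "fixed_classes H \<noteq> {}"
  shows "\<exists>r::int. \<phi> = 2 * of_int r * pi / real CARD('k)"
proof -
  obtain X where XH: "X \<in> fixed_classes H" using assms(2) by blast
  have X: "X \<in> caloron_moduli" "S_cls \<phi> X = X"
    using XH assms(1) unfolding fixed_classes_def by auto
  obtain m0 where m0: "nonsingular_monad m0" "X = monad_rel `` {m0}"
    using X(1) unfolding caloron_moduli_def quotient_def by blast
  obtain A0 B0 C0 D0 where m0e: "m0 = (A0, B0, C0, D0)" by (cases m0) blast
  have "(m0, m0) \<in> monad_rel"
  proof -
    have I1: "invertible (mat 1 :: complex^'k^'k)"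
      unfolding invertible_def by (rule exI[of _ "mat 1"]) simp
    moreover have "matrix_inv (mat 1 :: complex^'k^'k) = mat 1"
      using inv_right_aux[OF I1] by (simp add: matrix_mul_lid)
    ultimately have "monad_equiv m0 m0" unfolding monad_equiv_def m0e case_prod_conv
      by (intro exI[of _ "mat 1"] conjI) (simp_all add: matrix_mul_lid matrix_mul_rid)
    thus ?thesis using m0 unfolding monad_rel_def by simp
  qed
  hence "m0 \<in> X" using m0 by simp
  hence "m0 \<in> S_cls \<phi> X" using X by simp
  then obtain m' where m': "m' \<in> X" "(S_act \<phi> m', m0) \<in> monad_rel"
    unfolding S_cls_def by blast
  obtain A' B' C' D' where m'e: "m' = (A', B', C', D')" by (cases m') blast
  have "(m0, m') \<in> monad_rel" using m' m0 by simp
  hence "monad_equiv m0 m'" unfolding monad_rel_def by simp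
  hence "\<exists>g. invertible g \<and> A' = g ** A0 ** matrix_inv g"
    unfolding monad_equiv_def m0e m'e case_prod_conv prod.inject by blast
  then obtain g where g: "invertible g" "A' = g ** A0 ** matrix_inv g" by blast
  have dA': "det A' = det A0" using det_conj_aux[OF g(1)] g(2) by simp
  from m'(2) have "monad_equiv (S_act \<phi> m') m0" unfolding monad_rel_def by simp
  hence "\<exists>h. invertible h \<and> A0 = h ** (mat (exp (- \<i> * of_real \<phi>)) ** A') ** matrix_inv h"
    unfolding monad_equiv_def m0e m'e S_act_def case_prod_conv prod.inject by blast
  then obtain h where h: "invertible h"
    "A0 = h ** (mat (exp (- \<i> * of_real \<phi>)) ** A') ** matrix_inv h" by blast
  have "det A0 = det (h ** (mat (exp (- \<i> * of_real \<phi>)) ** A') ** matrix_inv h)"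
    using h(2) by simp
  also have "\<dots> = det (mat (exp (- \<i> * of_real \<phi>)) ** A')"
    by (rule det_conj_aux[OF h(1)])
  also have "\<dots> = exp (- \<i> * of_real \<phi>) ^ CARD('k) * det A0"
    by (simp only: det_mul det_mat_aux dA')
  finally have e: "det A0 = exp (- \<i> * of_real \<phi>) ^ CARD('k) * det A0" .
  moreover have "det A0 \<noteq> 0"
    using m0 unfolding m0e nonsingular_monad_def by (simp add: invertible_det_nz)
  ultimately have "exp (- \<i> * of_real \<phi>) ^ CARD('k) = 1" by simp
  hence "exp (of_nat CARD('k) * (- \<i> * of_real \<phi>)) = 1" by (simp only: exp_of_nat_mult)
  then obtain n :: int where n: "Im (of_nat CARD('k) * (- \<i> * of_real \<phi>)) = of_int (2 * n) * pi"
    unfolding exp_eq_1 by blast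
  hence "- (real CARD('k) * \<phi>) = 2 * of_int n * pi" by simp
  hence "\<phi> = 2 * of_int (- n) * pi / real CARD('k)" by (simp add: field_simps)
  thus ?thesis by blast
qed

end
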